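(* The density $\mathcal D$ of $\mu$ satisfies $\mathcal D(t)\sim\dfrac{1}{\sqrt{2\pi(1-t)}}$ as $t\to1^-$.
   Context: Let $(m_n)$ be the positive sequence with $m_0=1$, $(1+m_1+\cdots+m_n)m_n=1$ ($n\ge1$), and $\mu$ the probability measure on $[0,1]$ with moments $m_n$. The measure $\mu$ is absolutely continuous on $]0,1[$ with an increasing density $\mathcal D$ (explicitly $\mathcal D(t)=\rho_0+\sum_{p\ge1}\sum_{k=1}^{2^{p-1}}\rho_{p,k}t^{-\xi_{p,k}}$, where $\xi_{p,k}$ are the nonzero zeros and $\rho_0=1/f'(0)$, $\rho_{p,k}=1/f'(\xi_{p,k})$ for the meromorphic extension $f$ of $\int_0^1\frac{1-t^z}{1-t}d\mu(t)$). *)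

theory Defs
  imports "HOL-Probability.Probability" "HOL-Library.Landau_Symbols"
begin

definition moment_seq :: "(nat \<Rightarrow> real) \<Rightarrow> bool" where
  "moment_seq m \<longleftrightarrow> m 0 = 1 \<and> (\<forall>n. m n > 0) \<and>
     (\<forall>n\<ge>1. (1 + (\<Sum>k=1..n. m k)) * m n = 1)"

end

theory Submission
  imports Defs "HOL-Real_Asymp.Real_Asymp"
begin

lemma moment_asymp:
  assumes "moment_seq m"
  shows "(\<lambda>N. sqrt (real N) * m N) \<longlonglongrightarrow> 1 / sqrt 2"
proof -
  define S where "S N = 1 + (\<Sum>k=1..N. m k)" for N
  have mpos: "m k > 0" for k using assms by (auto simp: moment_seq_def)
  have S0: "S 0 = 1" by (simp add: S_def)
  have SSuc: "S (Suc N) = S N + m (Suc N)" for N by (simp add: S_def)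
  have Sm: "S (Suc N) * m (Suc N) = 1" for N using assms unfolding moment_seq_def S_def
    by (metis le_add1 plus_1_eq_Suc)
  have Sge: "S N \<ge> 1" for N unfolding S_def using mpos by (simp add: sum_nonneg less_imp_le)
  define T where "T N = (S N)^2" for N
  have Tge1: "T N \<ge> 1" for N unfolding T_def using Sge[of N] by (simp add: one_le_power)
  have Trec: "T (Suc N) = T N + 2 - 1 / T (Suc N)" for N
  proof -
    have m': "m (Suc N) = 1 / S (Suc N)" using Sm[of N] Sge[of "Suc N"] by (simp add: field_simps)
    have "S N = S (Suc N) - 1 / S (Suc N)" using SSuc[of N] m' by simp
    then have "T N = (S (Suc N) - 1 / S (Suc N))^2" by (simp add: T_def)
    also have "\<dots> = T (Suc N) - 2 + 1 / T (Suc N)" using Sge[of "Suc N"]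
      by (simp add: T_def power2_eq_square field_simps)
    finally show ?thesis by simp
  qed
  have Tlow1: "T N \<ge> real N + 1" for N
  proof (induction N)
    case 0 then show ?case using S0 by (simp add: T_def)
  next
    case (Suc N)
    have "1 / T (Suc N) \<le> 1" using Tge1[of "Suc N"] by simp
    then show ?case using Suc Trec[of N] by simp
  qed
  have Tup: "T N \<le> 2 * real N + 1" for N
  proof (induction N)
    case 0 then show ?case using S0 by (simp add: T_def)
  next
    case (Suc N)
    have "1 / T (Suc N) \<ge> 0" using Tge1[of "Suc N"] by simp
    then show ?case unfolding of_nat_Suc using Suc Trec[of N] by (smt (verit))
  qed
  have Tlow: "T N \<ge> 2 * real N + 1 - 2 * sqrt (real N)" for N
  proof (induction N)
    case 0 then show ?case using S0 by (simp add: T_def)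
  next
    case (Suc N)
    have "1 / T (Suc N) \<le> 1 / (real N + 2)" using Tlow1[of "Suc N"]
      by (intro divide_left_mono) auto
    moreover have "1 / (real N + 2) \<le> 2 * (sqrt (real N + 1) - sqrt (real N))"
    proof -
      have a: "sqrt (real N + 1) - sqrt (real N) = 1 / (sqrt (real N + 1) + sqrt (real N))"
      proof -
        have "(sqrt (real N + 1) - sqrt (real N)) * (sqrt (real N + 1) + sqrt (real N)) = 1"
          by (simp add: algebra_simps)
        moreover have "sqrt (real N + 1) + sqrt (real N) > 0"
          by (intro add_pos_nonneg) auto
        ultimately show ?thesis by (simp add: eq_divide_eq)
      qed
      have b: "sqrt (real N + 1) + sqrt (real N) \<le> 2 * (real N + 1)"
      proof -
        have "sqrt (real N + 1) \<le> real N + 1" using mult_nonneg_nonneg[of "real N" "real N"] by (intro real_le_lsqrt) (auto simp: power2_eq_square algebra_simps)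
        moreover have "sqrt (real N) \<le> real N + 1" using mult_nonneg_nonneg[of "real N" "real N"] by (intro real_le_lsqrt) (auto simp: power2_eq_square algebra_simps)
        ultimately show ?thesis by simp
      qed
      have "1 / (real N + 2) \<le> 1 / (real N + 1)" by (intro divide_left_mono) auto
      also have "\<dots> = 2 / (2 * (real N + 1))" by (simp add: divide_simps)
      also have "\<dots> \<le> 2 / (sqrt (real N + 1) + sqrt (real N))"
      proof (rule divide_left_mono)
        have pos: "0 < sqrt (real N + 1) + sqrt (real N)" by (intro add_pos_nonneg) auto
        show "0 < 2 * (real N + 1) * (sqrt (real N + 1) + sqrt (real N))"
          by (intro mult_pos_pos pos) auto
      qed (use b in auto)
      finally show ?thesis using a by simp
    qed
    ultimately show ?case using Suc Trec[of N] by (simp add: algebra_simps)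
  qed
  have eq: "sqrt (real N) * m N = sqrt (real N / T N)" if N1: "N \<ge> 1" for N
  proof -
    obtain K where K: "N = Suc K" using N1 by (cases N) auto
    have "m N = 1 / S N" using Sm[of K] Sge[of N] K by (simp add: field_simps)
    moreover have "sqrt (T N) = S N" using Sge[of N] by (simp add: T_def)
    ultimately show ?thesis by (simp add: real_sqrt_divide)
  qed
  have lim: "(\<lambda>N. real N / T N) \<longlonglongrightarrow> 1/2"
  proof (rule real_tendsto_sandwich)
    show "\<forall>\<^sub>F N in sequentially. real N / (2 * real N + 1) \<le> real N / T N"
      using Tup Tge1 by (intro always_eventually allI divide_left_mono mult_pos_pos) (auto intro: less_le_trans[OF zero_less_one])
    show "\<forall>\<^sub>F N in sequentially. real N / T N \<le> real N / (2 * real N + 1 - 2 * sqrt (real N))"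
    proof (rule eventually_mono[OF eventually_ge_at_top[of 4]])
      fix N :: nat assume N: "N \<ge> 4"
      have "sqrt (real N) \<le> real N / 2" using N mult_right_mono[of 4 "real N" "real N"] by (intro real_le_lsqrt) (auto simp: power2_eq_square)
      then have "2 * real N + 1 - 2 * sqrt (real N) > 0" using N by simp
      then show "real N / T N \<le> real N / (2 * real N + 1 - 2 * sqrt (real N))"
        using Tlow[of N] Tge1[of N] by (intro divide_left_mono mult_pos_pos) auto
    qed
    show "(\<lambda>N. real N / (2 * real N + 1)) \<longlonglongrightarrow> 1/2" by real_asymp
    show "(\<lambda>N. real N / (2 * real N + 1 - 2 * sqrt (real N))) \<longlonglongrightarrow> 1/2" by real_asymp
  qed
  have "(\<lambda>N. sqrt (real N / T N)) \<longlonglongrightarrow> sqrt (1/2)" by (intro tendsto_real_sqrt lim)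
  then have "(\<lambda>N. sqrt (real N) * m N) \<longlonglongrightarrow> sqrt (1/2)"
  proof (rule Lim_transform_eventually)
    show "\<forall>\<^sub>F x in sequentially. sqrt (real x / T x) = sqrt (real x) * m x"
      using eventually_ge_at_top[of 1] by eventually_elim (simp add: eq)
  qed
  then show ?thesis by (simp add: real_sqrt_divide)
qed

lemma K1: "((\<lambda>x::real. 1 / sqrt (2 * pi * x)) has_integral sqrt (2 / pi)) {0..1}"
proof -
  define c where "c = 2 / sqrt (2 * pi)"
  have "((\<lambda>x::real. 1 / sqrt (2 * pi * x)) has_integral (sqrt 1 * c - sqrt 0 * c)) {0..1}"
  proof (rule fundamental_theorem_of_calculus_interior)
    show "continuous_on {0..1} (\<lambda>x::real. sqrt x * c)"
      by (intro continuous_intros)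
    fix x :: real assume x: "x \<in> {0<..<1}"
    have "((\<lambda>x::real. sqrt x * c) has_real_derivative (inverse (sqrt x) / 2 * c)) (at x)"
      using x by (auto intro!: derivative_eq_intros)
    moreover have "inverse (sqrt x) / 2 * c = 1 / sqrt (2 * pi * x)"
      using x by (simp add: c_def real_sqrt_mult inverse_eq_divide)
    ultimately show "((\<lambda>x::real. sqrt x * c) has_vector_derivative 1 / sqrt (2 * pi * x)) (at x)"
      by (simp add: has_real_derivative_iff_has_vector_derivative)
  qed simp
  moreover have "sqrt 1 * c - sqrt 0 * c = sqrt (2 / pi)"
  proof -
    have "2 / sqrt (2*pi) = sqrt 2 * sqrt 2 / (sqrt 2 * sqrt pi)" by (simp add: real_sqrt_mult)
    also have "\<dots> = sqrt 2 / sqrt pi" by (rule mult_divide_mult_cancel_left) simp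
    finally show ?thesis by (simp add: real_sqrt_divide c_def)
  qed
  ultimately show ?thesis by simp
qed

lemma K:
  fixes k :: real assumes k: "k > 0"
  shows "((\<lambda>x. exp (-(k*x)) * (1 / sqrt (2 * pi * x))) has_integral 1 / sqrt (2 * k)) {0..}"
proof -
  define F where "F t = indicator {0..} t * (t powr (1/2 - 1) / exp t)" for t :: real
  have F0: "F t \<ge> 0" for t by (simp add: F_def)
  have Fm: "F \<in> borel_measurable borel" unfolding F_def by measurable
  have "(\<integral>\<^sup>+x. ennreal (x powr (1/2 - 1) / exp x) * indicator {0..} x \<partial>lborel) = ennreal (Gamma (1/2))"
    by (rule nn_integral_has_integral_lebesgue'[OF _ Gamma_integral_real]) auto
  moreover have "ennreal (F x) = ennreal (x powr (1/2 - 1) / exp x) * indicator {0..} x" for x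
    by (simp add: F_def indicator_def)
  ultimately have I1: "(\<integral>\<^sup>+x. ennreal (F x) \<partial>lborel) = ennreal (sqrt pi)"
    by (simp add: Gamma_one_half_real)
  have "(\<integral>\<^sup>+x. ennreal (F x) \<partial>lborel) = ennreal k * (\<integral>\<^sup>+x. ennreal (F (0 + k * x)) \<partial>lborel)"
    using nn_integral_real_affine[of "\<lambda>x. ennreal (F x)" k 0] k Fm by simp
  then have I2: "ennreal k * (\<integral>\<^sup>+x. ennreal (F (k * x)) \<partial>lborel) = ennreal (sqrt pi)" using I1 by simp
  define G where "G x = (if x \<in> {0..} then exp (-(k*x)) * (1 / sqrt (2 * pi * x)) else 0)" for x :: real
  have G0: "G x \<ge> 0" for x by (simp add: G_def)
  have Gm: "G \<in> borel_measurable borel" unfolding G_def by measurable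
  have GF: "G x = sqrt k / sqrt (2*pi) * F (k * x)" for x
  proof (cases "x > 0")
    case True
    have "(k*x) powr (1/2 - 1) = 1 / (sqrt k * sqrt x)"
      using True k by (simp add: powr_minus_divide powr_half_sqrt[symmetric] real_sqrt_mult powr_mult[symmetric])
    then show ?thesis using True k
      by (simp add: G_def F_def real_sqrt_mult exp_minus field_simps)
  next
    case False
    then show ?thesis using k by (cases "x = 0") (auto simp: G_def F_def indicator_def zero_le_mult_iff)
  qed
  have "(\<integral>\<^sup>+x. ennreal (G x) \<partial>lborel) = (\<integral>\<^sup>+x. ennreal (sqrt k / sqrt (2*pi)) * ennreal (F (k * x)) \<partial>lborel)"
    by (intro nn_integral_cong, simp only: GF) (rule ennreal_mult; simp add: F0 k less_imp_le)
  also have "\<dots> = ennreal (sqrt k / sqrt (2*pi)) * (\<integral>\<^sup>+x. ennreal (F (k * x)) \<partial>lborel)"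
  proof (intro nn_integral_cmult)
    have "(\<lambda>x. F (k * x)) \<in> borel_measurable borel" by (rule measurable_compose[OF _ Fm]) simp
    then show "(\<lambda>x. ennreal (F (k * x))) \<in> borel_measurable lborel" by simp
  qed
  also have "(\<integral>\<^sup>+x. ennreal (F (k * x)) \<partial>lborel) = ennreal (sqrt pi / k)"
  proof -
    have "ennreal k * (\<integral>\<^sup>+x. ennreal (F (k * x)) \<partial>lborel) = ennreal k * ennreal (sqrt pi / k)"
      using I2 k by (simp add: ennreal_mult[symmetric])
    then show ?thesis using k by (subst (asm) ennreal_mult_cancel_left) auto
  qed
  also have "ennreal (sqrt k / sqrt (2*pi)) * ennreal (sqrt pi / k) = ennreal (1 / sqrt (2 * k))"
  proof -
    have "sqrt k / sqrt (2*pi) * (sqrt pi / k) = 1 / sqrt (2 * k)"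
      using k by (simp add: real_sqrt_mult field_simps)
    then show ?thesis using k by (simp add: ennreal_mult[symmetric])
  qed
  finally have "(G has_integral 1 / sqrt (2 * k)) UNIV"
    using k by (intro nn_integral_has_integral[OF Gm G0]) auto
  then show ?thesis unfolding G_def has_integral_restrict_UNIV .
qed

definition Pc :: "(nat \<Rightarrow> real) \<Rightarrow> nat \<Rightarrow> real \<Rightarrow> real" where
  "Pc c K y = (\<Sum>k\<le>K. c k * y ^ (k+1))"

definition Lc :: "(nat \<Rightarrow> real) \<Rightarrow> nat \<Rightarrow> real" where
  "Lc c K = (\<Sum>k\<le>K. c k / sqrt (2 * real (k+1)))"

locale mu_setup =
  fixes m :: "nat \<Rightarrow> real" and \<mu> :: "real measure"
  assumes ps: "prob_space \<mu>" and sets_mu: "sets \<mu> = sets borel"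
    and null01: "emeasure \<mu> (- {0..1}) = 0"
    and mom: "\<And>n. (\<integral>t. t ^ n \<partial>\<mu>) = m n"
    and masy: "(\<lambda>N. sqrt (real N) * m N) \<longlonglongrightarrow> 1 / sqrt 2"
begin

lemma space_mu: "space \<mu> = UNIV"
  using sets_eq_imp_space_eq[OF sets_mu] by simp

lemma AE01: "AE t in \<mu>. t \<in> {0..1}"
  by (rule AE_I[where N="-{0..1}"]) (auto simp: null01 sets_mu)

lemma meas_mu: assumes "f \<in> borel_measurable borel" shows "f \<in> borel_measurable \<mu>"
  by (subst measurable_cong_sets[OF sets_mu refl]) (rule assms)

lemma integ_pow: "integrable \<mu> (\<lambda>t. t ^ N)"
proof -
  interpret prob_space \<mu> by (rule ps)
  show ?thesis
  proof (rule integrable_const_bound[where B=1])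
    show "AE x in \<mu>. norm (x ^ N) \<le> 1"
      using AE01 by eventually_elim (auto simp: power_abs power_le_one)
    show "(\<lambda>t. t ^ N) \<in> borel_measurable \<mu>" by (intro meas_mu) measurable
  qed
qed

lemma integ_Pc: "integrable \<mu> (\<lambda>t. Pc c K (t ^ n))"
  unfolding Pc_def power_mult[symmetric] using integ_pow by auto

lemma int_Pc: "(\<integral>t. Pc c K (t ^ n) \<partial>\<mu>) = (\<Sum>k\<le>K. c k * m (n * (k+1)))"
proof -
  have "(\<integral>t. (\<Sum>k\<le>K. c k * t^(n*(k+1))) \<partial>\<mu>) = (\<Sum>k\<le>K. \<integral>t. c k * t^(n*(k+1)) \<partial>\<mu>)"
    by (rule Bochner_Integration.integral_sum) (simp add: integ_pow)
  then show ?thesis unfolding Pc_def power_mult[symmetric] by (simp add: mom)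
qed

lemma lim_Pc: "(\<lambda>n. sqrt (real n) * (\<integral>t. Pc c K (t ^ n) \<partial>\<mu>)) \<longlonglongrightarrow> Lc c K"
proof -
  have one: "(\<lambda>n. sqrt (real n) * m (n * (k+1))) \<longlonglongrightarrow> 1 / sqrt (2 * real (k+1))" for k
  proof -
    have sm: "strict_mono (\<lambda>n. n * (k+1))" by (rule strict_monoI) (simp only: mult_less_cancel2, simp)
    have "((\<lambda>N. sqrt (real N) * m N) \<circ> (\<lambda>n. n * (k+1))) \<longlonglongrightarrow> 1 / sqrt 2"
      by (rule LIMSEQ_subseq_LIMSEQ[OF masy sm])
    then have "(\<lambda>n. sqrt (real (n * (k+1))) * m (n * (k+1)) / sqrt (real (k+1))) \<longlonglongrightarrow> 1 / sqrt 2 / sqrt (real (k+1))"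
      by (intro tendsto_divide) (auto simp: o_def)
    moreover have "sqrt (real (n * (k+1))) * m (n * (k+1)) / sqrt (real (k+1)) = sqrt (real n) * m (n * (k+1))" for n
    proof -
      have "sqrt (real (n*(k+1))) = sqrt (real n) * sqrt (real (k+1))" by (simp only: of_nat_mult real_sqrt_mult)
      then show ?thesis by simp
    qed
    moreover have "1 / sqrt 2 / sqrt (real (k+1)) = 1 / sqrt (2 * real (k+1))"
      by (simp only: real_sqrt_mult divide_divide_eq_left)
    ultimately show ?thesis by simp
  qed
  have "(\<lambda>n. \<Sum>k\<le>K. c k * (sqrt (real n) * m (n * (k+1)))) \<longlonglongrightarrow> (\<Sum>k\<le>K. c k * (1 / sqrt (2 * real (k+1))))"
    by (intro tendsto_sum tendsto_mult tendsto_const one)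
  then show ?thesis
    by (simp add: int_Pc Lc_def sum_distrib_left mult_ac)
qed

end

lemma hasint_Pc:
  "((\<lambda>x. Pc c K (exp (-x)) * (1 / sqrt (2 * pi * x))) has_integral Lc c K) {0..}"
proof -
  have "((\<lambda>x. \<Sum>k\<le>K. c k * (exp (-(real (k+1) * x)) * (1 / sqrt (2 * pi * x)))) has_integral
         (\<Sum>k\<le>K. c k * (1 / sqrt (2 * real (k+1))))) {0..}"
    by (intro has_integral_sum has_integral_mult_right K) auto
  moreover have pw: "exp (-x) ^ (k+1) = exp (-(real (k+1) * x))" for x :: real and k
    by (metis exp_of_nat_mult mult_minus_right)
  moreover have "Pc c K (exp (-x)) * (1 / sqrt (2 * pi * x)) = (\<Sum>k\<le>K. c k * (exp (-(real (k+1) * x)) * (1 / sqrt (2 * pi * x))))" for x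
    by (simp only: Pc_def sum_distrib_right pw mult.assoc)
  moreover have "Lc c K = (\<Sum>k\<le>K. c k * (1 / sqrt (2 * real (k+1))))"
    by (simp add: Lc_def)
  ultimately show ?thesis by simp
qed

definition Hf :: "real \<Rightarrow> real \<Rightarrow> real \<Rightarrow> real" where
  "Hf \<eta> s y = max 0 (min 1 ((1 + s + ln (max y (exp (-2)))) / \<eta>))"

lemma Hf_ge0: "Hf \<eta> s y \<ge> 0" and Hf_le1: "Hf \<eta> s y \<le> 1"
  by (auto simp: Hf_def)

lemma Hf_small:
  assumes "0 < \<eta>" "\<eta> < 1" "0 \<le> s" "s \<le> \<eta>" "y \<le> exp (-2)"
  shows "Hf \<eta> s y = 0"
proof -
  have "max y (exp (-2)) = exp (-2)" using assms by simp
  then have "1 + s + ln (max y (exp (-2))) < 0" using assms by simp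
  then have "(1 + s + ln (max y (exp (-2)))) / \<eta> < 0" using assms by (simp add: divide_neg_pos)
  then show ?thesis by (simp add: Hf_def)
qed

lemma Hf_low:
  assumes "0 < \<eta>" "\<eta> < 1" "0 \<le> y"
  shows "Hf \<eta> 0 y \<le> (if exp (-1) \<le> y then 1 else 0)"
proof (cases "exp (-1) \<le> y")
  case True then show ?thesis by (simp add: Hf_le1)
next
  case False
  have "max y (exp (-2)) < exp (-1)" using False by simp
  moreover have "max y (exp (-2)) > 0" by (simp add: less_max_iff_disj)
  ultimately have "ln (max y (exp (-2))) < -1" by (metis ln_exp ln_less_cancel_iff exp_gt_zero)
  then have "(1 + 0 + ln (max y (exp (-2)))) / \<eta> < 0" using assms by (simp add: divide_neg_pos)
  then show ?thesis using False by (simp add: Hf_def)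
qed

lemma Hf_up:
  assumes "0 < \<eta>" "\<eta> < 1" "0 \<le> y"
  shows "(if exp (-1) \<le> y then 1 else 0) \<le> Hf \<eta> \<eta> y"
proof (cases "exp (-1) \<le> y")
  case False then show ?thesis by (simp add: Hf_ge0)
next
  case True
  have yp: "y > 0" using True by (meson exp_gt_zero less_le_trans)
  have "ln y \<ge> -1" using True yp by (metis ln_exp ln_le_cancel_iff exp_gt_zero)
  moreover have "ln (max y (exp (-2))) \<ge> ln y" using yp by simp
  ultimately have "(1 + \<eta> + ln (max y (exp (-2)))) / \<eta> \<ge> 1" using assms by (simp add: le_divide_eq)
  then show ?thesis using True by (simp add: Hf_def)
qed

lemma Hf_low_x:
  assumes "0 < \<eta>" "\<eta> \<le> 1/2" "0 \<le> x"
  shows "(if exp (-1) \<le> exp (-x) then 1 else 0) - Hf \<eta> 0 (exp (-x)) \<le> (if x \<in> {1-\<eta>..1} then 1 else 0)"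
proof (cases "x < 1 - \<eta>")
  case True
  have "max (exp (-x)) (exp (-2)) = exp (-x)" using True assms by simp
  then have "(1 + 0 + ln (max (exp (-x)) (exp (-2)))) / \<eta> \<ge> 1" using True assms by (simp add: le_divide_eq)
  then have "Hf \<eta> 0 (exp (-x)) = 1" by (simp add: Hf_def)
  then show ?thesis by simp
next
  case False
  then show ?thesis using Hf_ge0[of \<eta> 0 "exp (-x)"] by auto
qed

lemma Hf_up_x:
  assumes "0 < \<eta>" "\<eta> \<le> 1/2" "0 \<le> x"
  shows "Hf \<eta> \<eta> (exp (-x)) - (if exp (-1) \<le> exp (-x) then 1 else 0) \<le> (if x \<in> {1..1+\<eta>} then 1 else 0)"
proof (cases "x > 1 + \<eta>")
  case True
  have "ln (max (exp (-x)) (exp (-2))) = max (-x) (-2)"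
    by (metis ln_exp max_def exp_le_cancel_iff)
  then have "(1 + \<eta> + ln (max (exp (-x)) (exp (-2)))) / \<eta> < 0" using True assms by (simp add: divide_neg_pos)
  then have "Hf \<eta> \<eta> (exp (-x)) = 0" by (simp add: Hf_def)
  then show ?thesis using True by simp
next
  case False
  then show ?thesis using Hf_le1[of \<eta> \<eta> "exp (-x)"] by auto
qed

lemma Hf_cont: "0 < \<eta> \<Longrightarrow> continuous_on {0..1} (\<lambda>y. Hf \<eta> s y / max y (exp (-2)))"
  unfolding Hf_def by (intro continuous_intros) (auto simp: max_def split: if_splits)

lemma Hf_mult: 
  assumes "0 < \<eta>" "\<eta> < 1" "0 \<le> s" "s \<le> \<eta>"
  shows "y * (Hf \<eta> s y / max y (exp (-2))) = Hf \<eta> s y"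
proof (cases "y \<le> exp (-2)")
  case True then show ?thesis using Hf_small[OF assms True] by simp
next
  case False
  then have "y > 0" by (meson exp_gt_zero less_trans not_le)
  then show ?thesis using False by simp
qed

lemma sandwich_eps:
  fixes x :: "nat \<Rightarrow> real"
  assumes "\<And>e. e > 0 \<Longrightarrow> \<exists>a b A B. eventually (\<lambda>n. a n \<le> x n \<and> x n \<le> b n) sequentially \<and>
              a \<longlonglongrightarrow> A \<and> b \<longlonglongrightarrow> B \<and> c - e \<le> A \<and> B \<le> c + e"
  shows "x \<longlonglongrightarrow> c"
proof (rule tendstoI)
  fix e :: real assume e: "e > 0"
  then obtain a b A B where ab: "eventually (\<lambda>n. a n \<le> x n \<and> x n \<le> b n) sequentially"
    and a: "a \<longlonglongrightarrow> A" and b: "b \<longlonglongrightarrow> B" and AB: "c - e/2 \<le> A" "B \<le> c + e/2"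
    using assms[of "e/2"] by auto
  have "eventually (\<lambda>n. a n > A - e/2) sequentially" using order_tendstoD(1)[OF a] e by simp
  moreover have "eventually (\<lambda>n. b n < B + e/2) sequentially" using order_tendstoD(2)[OF b] e by simp
  ultimately show "eventually (\<lambda>n. dist (x n) c < e) sequentially"
    using ab by eventually_elim (use AB in \<open>auto simp: dist_real_def abs_less_iff\<close>)
qed

lemma Pc_shift: "Pc (\<lambda>i. a i + (if i = 0 then d else 0)) N y = y * ((\<Sum>i\<le>N. a i * y^i) + d)"
proof -
  have "Pc (\<lambda>i. a i + (if i = 0 then d else 0)) N y = (\<Sum>i\<le>N. a i * y^(i+1)) + (\<Sum>i\<le>N. (if i = 0 then d * y else 0))"
    unfolding Pc_def by (subst sum.distrib[symmetric]) (rule sum.cong; auto simp: algebra_simps)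
  also have "(\<Sum>i\<le>N. (if i = 0 then d * y else 0)) = d * y" by (simp add: sum.delta)
  also have "(\<Sum>i\<le>N. a i * y^(i+1)) = y * (\<Sum>i\<le>N. a i * y^i)"
    by (simp add: sum_distrib_left mult_ac)
  finally show ?thesis by (simp add: algebra_simps)
qed

lemma w_le1: assumes "x \<ge> 1/2" shows "1 / sqrt (2 * pi * x) \<le> 1"
proof -
  have "3 * (1/2) \<le> pi * x" using mult_mono[of 3 pi "1/2" x] pi_gt3 assms by auto
  then have "1 \<le> 2 * pi * x" by simp
  then have "1 \<le> sqrt (2 * pi * x)" by simp
  then show ?thesis by simp
qed

lemma hasint_G: "((\<lambda>x. (if exp (-1) \<le> exp (-x) then 1 else 0) * (1 / sqrt (2 * pi * x))) has_integral sqrt (2/pi)) {0..}"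
proof -
  have "((\<lambda>x. if x \<in> {0..1} then 1 / sqrt (2 * pi * x) else 0) has_integral sqrt (2/pi)) {0..}"
    using K1 by (subst has_integral_restrict) auto
  then show ?thesis by (rule has_integral_eq[rotated]) auto
qed

lemma hasint_ind: fixes a b :: real assumes "0 \<le> a" "a \<le> b"
  shows "((\<lambda>x. if x \<in> {a..b} then 1 else 0) has_integral (b - a)) {0..}"
proof -
  have "((\<lambda>x. 1::real) has_integral (b - a)) {a..b}"
    using has_integral_const_real[of "1::real" a b] assms by simp
  then show ?thesis using assms by (subst has_integral_restrict) auto
qed

lemma L_low:
  assumes eta: "0 < \<eta>" "\<eta> \<le> 1/2" and d: "\<delta> > 0"
    and P1: "\<And>y. y \<in> {0..1} \<Longrightarrow> Hf \<eta> 0 y - Pc c K y \<le> 2 * \<delta> * y"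
  shows "sqrt (2/pi) - Lc c K \<le> \<eta> + 2 * \<delta>"
proof -
  define w where "w x = 1 / sqrt (2 * pi * x)" for x :: real
  define G where "G y = (if exp (-1) \<le> y then 1 else 0 :: real)" for y :: real
  have h1: "((\<lambda>x. G (exp (-x)) * w x - Pc c K (exp (-x)) * w x) has_integral (sqrt (2/pi) - Lc c K)) {0..}"
    unfolding G_def w_def by (intro has_integral_diff hasint_G hasint_Pc)
  have h2: "((\<lambda>x. (if x \<in> {1-\<eta>..1} then 1 else 0) + 2 * \<delta> * (exp (-(1*x)) * w x)) has_integral (1 - (1 - \<eta>) + 2 * \<delta> * (1 / sqrt (2 * 1)))) {0..}"
    unfolding w_def using eta by (intro has_integral_add hasint_ind has_integral_mult_right K) auto
  have "sqrt (2/pi) - Lc c K \<le> 1 - (1 - \<eta>) + 2 * \<delta> * (1 / sqrt (2 * 1))"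
  proof (rule has_integral_le[OF h1 h2])
    fix x :: real assume x: "x \<in> {0..}"
    define y where "y = exp (-x)"
    have y01: "y \<in> {0..1}" using x by (simp add: y_def)
    have a: "G y - Hf \<eta> 0 y \<le> (if x \<in> {1-\<eta>..1} then 1 else 0)"
      using Hf_low_x[OF eta, of x] x by (simp add: G_def y_def)
    have b: "Hf \<eta> 0 y - Pc c K y \<le> 2 * \<delta> * y" using P1 y01 .
    have w0: "w x \<ge> 0" using x by (simp add: w_def)
    have c: "(if x \<in> {1-\<eta>..1} then 1 else 0) * w x \<le> (if x \<in> {1-\<eta>..1} then 1 else 0)"
      using w_le1[of x] eta by (auto simp: w_def)
    have "(G y - Pc c K y) * w x \<le> ((if x \<in> {1-\<eta>..1} then 1 else 0) + 2 * \<delta> * y) * w x"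
      using a b w0 by (intro mult_right_mono) auto
    also have "\<dots> \<le> (if x \<in> {1-\<eta>..1} then 1 else 0) + 2 * \<delta> * (y * w x)"
      using c by (simp add: algebra_simps)
    finally show "G (exp (-x)) * w x - Pc c K (exp (-x)) * w x \<le> (if x \<in> {1-\<eta>..1} then 1 else 0) + 2 * \<delta> * (exp (-(1*x)) * w x)"
      by (simp add: y_def algebra_simps)
  qed
  moreover have "2 * \<delta> * (1 / sqrt (2 * 1)) \<le> 2 * \<delta> * 1" using d by (intro mult_left_mono) auto
  ultimately show ?thesis by simp
qed

lemma L_up:
  assumes eta: "0 < \<eta>" "\<eta> \<le> 1/2" and d: "\<delta> > 0"
    and P1: "\<And>y. y \<in> {0..1} \<Longrightarrow> Pc c K y - Hf \<eta> \<eta> y \<le> 2 * \<delta> * y"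
  shows "Lc c K - sqrt (2/pi) \<le> \<eta> + 2 * \<delta>"
proof -
  define w where "w x = 1 / sqrt (2 * pi * x)" for x :: real
  define G where "G y = (if exp (-1) \<le> y then 1 else 0 :: real)" for y :: real
  have h1: "((\<lambda>x. Pc c K (exp (-x)) * w x - G (exp (-x)) * w x) has_integral (Lc c K - sqrt (2/pi))) {0..}"
    unfolding G_def w_def by (intro has_integral_diff hasint_G hasint_Pc)
  have h2: "((\<lambda>x. (if x \<in> {1..1+\<eta>} then 1 else 0) + 2 * \<delta> * (exp (-(1*x)) * w x)) has_integral (1 + \<eta> - 1 + 2 * \<delta> * (1 / sqrt (2 * 1)))) {0..}"
    unfolding w_def using eta by (intro has_integral_add hasint_ind has_integral_mult_right K) auto
  have "Lc c K - sqrt (2/pi) \<le> 1 + \<eta> - 1 + 2 * \<delta> * (1 / sqrt (2 * 1))"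
  proof (rule has_integral_le[OF h1 h2])
    fix x :: real assume x: "x \<in> {0..}"
    define y where "y = exp (-x)"
    have y01: "y \<in> {0..1}" using x by (simp add: y_def)
    have a: "Hf \<eta> \<eta> y - G y \<le> (if x \<in> {1..1+\<eta>} then 1 else 0)"
      using Hf_up_x[OF eta, of x] x by (simp add: G_def y_def)
    have b: "Pc c K y - Hf \<eta> \<eta> y \<le> 2 * \<delta> * y" using P1 y01 .
    have w0: "w x \<ge> 0" using x by (simp add: w_def)
    have c: "(if x \<in> {1..1+\<eta>} then 1 else 0) * w x \<le> (if x \<in> {1..1+\<eta>} then 1 else 0)"
      using w_le1[of x] eta by (auto simp: w_def)
    have "(Pc c K y - G y) * w x \<le> ((if x \<in> {1..1+\<eta>} then 1 else 0) + 2 * \<delta> * y) * w x"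
      using a b w0 by (intro mult_right_mono) auto
    also have "\<dots> \<le> (if x \<in> {1..1+\<eta>} then 1 else 0) + 2 * \<delta> * (y * w x)"
      using c by (simp add: algebra_simps)
    finally show "Pc c K (exp (-x)) * w x - G (exp (-x)) * w x \<le> (if x \<in> {1..1+\<eta>} then 1 else 0) + 2 * \<delta> * (exp (-(1*x)) * w x)"
      by (simp add: y_def algebra_simps)
  qed
  moreover have "2 * \<delta> * (1 / sqrt (2 * 1)) \<le> 2 * \<delta> * 1" using d by (intro mult_left_mono) auto
  ultimately show ?thesis by simp
qed

context mu_setup
begin

lemma ind_eq:
  assumes n: "n \<ge> 1" and t: "t \<in> {0..1}"
  shows "(if exp (-1) \<le> t ^ n then 1 else 0) = (indicator {exp (-1 / real n)..1} t :: real)"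
proof (cases "t = 0")
  case True
  have "t ^ n = 0" using True n by (cases n) auto
  then show ?thesis using True n by (simp add: indicator_def not_le zero_power)
next
  case False
  then have tp: "t > 0" using t by simp
  have "t ^ n = exp (real n * ln t)" using tp by (simp add: exp_of_nat_mult)
  then have "(exp (-1) \<le> t ^ n) \<longleftrightarrow> -1 \<le> real n * ln t" by simp
  also have "\<dots> \<longleftrightarrow> -1 / real n \<le> ln t"
  proof -
    have np: "real n > 0" using n by simp
    show ?thesis using pos_divide_le_eq[OF np, of "-1" "ln t"] by (simp only: mult.commute)
  qed
  also have "\<dots> \<longleftrightarrow> exp (-1 / real n) \<le> t" using tp by (metis exp_le_cancel_iff exp_ln)
  finally show ?thesis using t by (auto simp: indicator_def)
qed

lemma I_le:
  assumes n: "n \<ge> 1" and P: "\<And>y. y \<in> {0..1} \<Longrightarrow> Pc c K y \<le> (if exp (-1) \<le> y then 1 else 0)"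
  shows "sqrt (real n) * (\<integral>t. Pc c K (t ^ n) \<partial>\<mu>) \<le> sqrt (real n) * measure \<mu> {exp (-1 / real n)..1}"
proof -
  interpret prob_space \<mu> by (rule ps)
  have "(\<integral>t. Pc c K (t ^ n) \<partial>\<mu>) \<le> (\<integral>t. indicator {exp (-1 / real n)..1} t \<partial>\<mu>)"
  proof (rule integral_mono_AE[OF integ_Pc])
    show "integrable \<mu> (indicator {exp (-1 / real n)..1} :: real \<Rightarrow> real)"
      by (intro integrable_real_indicator) (auto simp: sets_mu less_top[symmetric] emeasure_finite)
    show "AE x in \<mu>. Pc c K (x ^ n) \<le> indicator {exp (-1 / real n)..1} x"
      using AE01
    proof eventually_elim
      fix x :: real assume x: "x \<in> {0..1}"
      then have "x^n \<in> {0..1}" by (auto simp: power_le_one)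
      then show "Pc c K (x ^ n) \<le> indicator {exp (-1 / real n)..1} x" using P[of "x^n"] ind_eq[OF n x] by simp
    qed
  qed
  then show ?thesis by (simp add: space_mu mult_left_mono)
qed

lemma I_ge:
  assumes n: "n \<ge> 1" and P: "\<And>y. y \<in> {0..1} \<Longrightarrow> (if exp (-1) \<le> y then 1 else 0) \<le> Pc c K y"
  shows "sqrt (real n) * measure \<mu> {exp (-1 / real n)..1} \<le> sqrt (real n) * (\<integral>t. Pc c K (t ^ n) \<partial>\<mu>)"
proof -
  interpret prob_space \<mu> by (rule ps)
  have "(\<integral>t. indicator {exp (-1 / real n)..1} t \<partial>\<mu>) \<le> (\<integral>t. Pc c K (t ^ n) \<partial>\<mu>)"
  proof (rule integral_mono_AE[OF _ integ_Pc])
    show "integrable \<mu> (indicator {exp (-1 / real n)..1} :: real \<Rightarrow> real)"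
      by (intro integrable_real_indicator) (auto simp: sets_mu less_top[symmetric] emeasure_finite)
    show "AE x in \<mu>. indicator {exp (-1 / real n)..1} x \<le> Pc c K (x ^ n)"
      using AE01
    proof eventually_elim
      fix x :: real assume x: "x \<in> {0..1}"
      then have "x^n \<in> {0..1}" by (auto simp: power_le_one)
      then show "indicator {exp (-1 / real n)..1} x \<le> Pc c K (x ^ n)" using P[of "x^n"] ind_eq[OF n x] by simp
    qed
  qed
  then show ?thesis by (simp add: space_mu mult_left_mono)
qed

lemma taub: "(\<lambda>n. sqrt (real n) * measure \<mu> {exp (-1 / real n)..1}) \<longlonglongrightarrow> sqrt (2/pi)"
proof (rule sandwich_eps)
  fix e :: real assume e: "e > 0"
  define \<eta> where "\<eta> = min (1/2) (e/2)"
  define \<delta> where "\<delta> = e/4"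
  have eta: "0 < \<eta>" "\<eta> \<le> 1/2" "\<eta> < 1" using e by (auto simp: \<eta>_def)
  have d: "\<delta> > 0" using e by (simp add: \<delta>_def)
  have ed: "\<eta> + 2 * \<delta> \<le> e" by (simp add: \<eta>_def \<delta>_def)
  define k1 where "k1 y = Hf \<eta> 0 y / max y (exp (-2))" for y
  define k2 where "k2 y = Hf \<eta> \<eta> y / max y (exp (-2))" for y
  obtain g1 where g1: "real_polynomial_function g1" "\<And>y. y \<in> {0..1} \<Longrightarrow> \<bar>k1 y - g1 y\<bar> < \<delta>"
    using Stone_Weierstrass_real_polynomial_function[OF compact_Icc Hf_cont[OF eta(1), of 0] d]
    unfolding k1_def by blast
  obtain g2 where g2: "real_polynomial_function g2" "\<And>y. y \<in> {0..1} \<Longrightarrow> \<bar>k2 y - g2 y\<bar> < \<delta>"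
    using Stone_Weierstrass_real_polynomial_function[OF compact_Icc Hf_cont[OF eta(1), of \<eta>] d]
    unfolding k2_def by blast
  obtain a1 N1 where a1: "g1 = (\<lambda>x. \<Sum>i\<le>N1. a1 i * x^i)" using g1(1) real_polynomial_function_iff_sum by blast
  obtain a2 N2 where a2: "g2 = (\<lambda>x. \<Sum>i\<le>N2. a2 i * x^i)" using g2(1) real_polynomial_function_iff_sum by blast
  define c1 where "c1 i = a1 i + (if i = 0 then -\<delta> else 0)" for i
  define c2 where "c2 i = a2 i + (if i = 0 then \<delta> else 0)" for i
  have P1: "Pc c1 N1 y = y * (g1 y - \<delta>)" for y unfolding c1_def a1 Pc_shift by simp
  have P2: "Pc c2 N2 y = y * (g2 y + \<delta>)" for y unfolding c2_def a2 Pc_shift by simp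
  have k1m: "y * k1 y = Hf \<eta> 0 y" for y unfolding k1_def using eta by (intro Hf_mult) auto
  have k2m: "y * k2 y = Hf \<eta> \<eta> y" for y unfolding k2_def using eta by (intro Hf_mult) auto
  have Q1: "Pc c1 N1 y \<le> Hf \<eta> 0 y" and Q1': "Hf \<eta> 0 y - Pc c1 N1 y \<le> 2 * \<delta> * y" if y: "y \<in> {0..1}" for y
  proof -
    have "g1 y - \<delta> \<le> k1 y" "k1 y - (g1 y - \<delta>) \<le> 2 * \<delta>" using g1(2)[OF y] by auto
    then have "y * (g1 y - \<delta>) \<le> y * k1 y" "y * (k1 y - (g1 y - \<delta>)) \<le> y * (2 * \<delta>)"
      using y by (auto intro: mult_left_mono)
    then show "Pc c1 N1 y \<le> Hf \<eta> 0 y" "Hf \<eta> 0 y - Pc c1 N1 y \<le> 2 * \<delta> * y"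
      by (simp_all add: P1 k1m[symmetric] algebra_simps)
  qed
  have Q2: "Hf \<eta> \<eta> y \<le> Pc c2 N2 y" and Q2': "Pc c2 N2 y - Hf \<eta> \<eta> y \<le> 2 * \<delta> * y" if y: "y \<in> {0..1}" for y
  proof -
    have "k2 y \<le> g2 y + \<delta>" "(g2 y + \<delta>) - k2 y \<le> 2 * \<delta>" using g2(2)[OF y] by auto
    then have "y * k2 y \<le> y * (g2 y + \<delta>)" "y * ((g2 y + \<delta>) - k2 y) \<le> y * (2 * \<delta>)"
      using y by (auto intro: mult_left_mono)
    then show "Hf \<eta> \<eta> y \<le> Pc c2 N2 y" "Pc c2 N2 y - Hf \<eta> \<eta> y \<le> 2 * \<delta> * y"
      by (simp_all add: P2 k2m[symmetric] algebra_simps)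
  qed
  have G1: "Pc c1 N1 y \<le> (if exp (-1) \<le> y then 1 else 0)" if "y \<in> {0..1}" for y
    using Q1[OF that] Hf_low[OF eta(1,3), of y] that by simp
  have G2: "(if exp (-1) \<le> y then 1 else 0) \<le> Pc c2 N2 y" if "y \<in> {0..1}" for y
    using Q2[OF that] Hf_up[OF eta(1,3), of y] that by simp
  show "\<exists>a b A B. eventually (\<lambda>n. a n \<le> sqrt (real n) * measure \<mu> {exp (-1 / real n)..1} \<and>
              sqrt (real n) * measure \<mu> {exp (-1 / real n)..1} \<le> b n) sequentially \<and>
              a \<longlonglongrightarrow> A \<and> b \<longlonglongrightarrow> B \<and> sqrt (2/pi) - e \<le> A \<and> B \<le> sqrt (2/pi) + e"
  proof (intro exI conjI)
    show "eventually (\<lambda>n. sqrt (real n) * (\<integral>t. Pc c1 N1 (t ^ n) \<partial>\<mu>) \<le> sqrt (real n) * measure \<mu> {exp (-1 / real n)..1} \<and>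
              sqrt (real n) * measure \<mu> {exp (-1 / real n)..1} \<le> sqrt (real n) * (\<integral>t. Pc c2 N2 (t ^ n) \<partial>\<mu>)) sequentially"
      using eventually_ge_at_top[of 1] by eventually_elim (use I_le G1 I_ge G2 in blast)
    show "(\<lambda>n. sqrt (real n) * (\<integral>t. Pc c1 N1 (t ^ n) \<partial>\<mu>)) \<longlonglongrightarrow> Lc c1 N1" by (rule lim_Pc)
    show "(\<lambda>n. sqrt (real n) * (\<integral>t. Pc c2 N2 (t ^ n) \<partial>\<mu>)) \<longlonglongrightarrow> Lc c2 N2" by (rule lim_Pc)
    show "sqrt (2/pi) - e \<le> Lc c1 N1" using L_low[OF eta(1,2) d Q1'] ed by simp
    show "Lc c2 N2 \<le> sqrt (2/pi) + e" using L_up[OF eta(1,2) d Q2'] ed by simp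
  qed
qed

end

context mu_setup
begin

lemma Vmono: "s \<le> s' \<Longrightarrow> measure \<mu> {s'..1} \<le> measure \<mu> {s..1}"
proof -
  assume "s \<le> s'"
  interpret prob_space \<mu> by (rule ps)
  show ?thesis using \<open>s \<le> s'\<close> by (intro finite_measure_mono) (auto simp: sets_mu)
qed

lemma Vlim: "((\<lambda>u. measure \<mu> {exp (-u)..1} / sqrt u) \<longlongrightarrow> sqrt (2/pi)) (at_right 0)"
proof -
  define V where "V s = measure \<mu> {s..1}" for s
  have V0: "V s \<ge> 0" for s by (simp add: V_def)
  define N where "N u = nat \<lfloor>inverse u\<rfloor>" for u :: real
  have NF: "filterlim N sequentially (at_right 0)"
    unfolding N_def
    by (intro filterlim_compose[OF filterlim_nat_sequentially] filterlim_compose[OF filterlim_floor_sequentially]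
        filterlim_inverse_at_top_right)
  define a where "a n = (sqrt (real n) * V (exp (-1 / real n))) * sqrt ((real n + 1) / real n)" for n
  define b where "b n = (sqrt (real (Suc n)) * V (exp (-1 / real (Suc n)))) * sqrt (real n / (real n + 1))" for n
  have t: "(\<lambda>n. sqrt (real n) * V (exp (-1 / real n))) \<longlonglongrightarrow> sqrt (2/pi)"
    using taub by (simp add: V_def)
  have s1: "(\<lambda>n. sqrt ((real n + 1) / real n)) \<longlonglongrightarrow> 1" by real_asymp
  have s2: "(\<lambda>n. sqrt (real n / (real n + 1))) \<longlonglongrightarrow> 1" by real_asymp
  have alim: "a \<longlonglongrightarrow> sqrt (2/pi)" unfolding a_def using tendsto_mult[OF t s1] by simp
  have blim: "b \<longlonglongrightarrow> sqrt (2/pi)" unfolding b_def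
    using tendsto_mult[OF LIMSEQ_Suc[OF t] s2] by simp
  show ?thesis
  proof (rule real_tendsto_sandwich[where f="\<lambda>u. b (N u)" and h="\<lambda>u. a (N u)"])
    show "((\<lambda>u. a (N u)) \<longlongrightarrow> sqrt (2/pi)) (at_right 0)" by (rule filterlim_compose[OF alim NF])
    show "((\<lambda>u. b (N u)) \<longlongrightarrow> sqrt (2/pi)) (at_right 0)" by (rule filterlim_compose[OF blim NF])
    have ev: "eventually (\<lambda>u::real. 0 < u \<and> u < 1) (at_right 0)"
      unfolding eventually_at_right_field by (intro exI[of _ 1]) auto
    have key: "b (N u) \<le> measure \<mu> {exp (-u)..1} / sqrt u \<and> measure \<mu> {exp (-u)..1} / sqrt u \<le> a (N u)"
      if u: "0 < u" "u < 1" for u :: real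
    proof -
      define n where "n = N u"
      have fl: "real_of_int \<lfloor>inverse u\<rfloor> \<le> inverse u" "inverse u < real_of_int \<lfloor>inverse u\<rfloor> + 1"
        by linarith+
      have inv1: "inverse u > 1" using u by (simp add: one_less_inverse)
      then have flpos: "\<lfloor>inverse u\<rfloor> \<ge> 1" by linarith
      have fl0: "0 \<le> \<lfloor>inverse u\<rfloor>" using flpos by linarith
      have rn: "real n = real_of_int \<lfloor>inverse u\<rfloor>" unfolding n_def N_def using of_nat_nat[OF fl0] by simp
      have n1: "real n \<ge> 1" using rn flpos by simp
      have un: "real n \<le> 1 / u" "1 / u < real n + 1" using fl rn by (simp_all add: inverse_eq_divide)
      have u1: "u \<le> 1 / real n" using un u n1 by (simp add: field_simps)
      have u2: "1 / (real n + 1) < u" using un u n1 by (simp add: field_simps)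
      have Vu1: "V (exp (-u)) \<le> V (exp (-1 / real n))" using u1 by (intro Vmono[unfolded V_def[symmetric]]) simp
      have Vu2: "V (exp (-1 / (real n + 1))) \<le> V (exp (-u))" using u2 by (intro Vmono[unfolded V_def[symmetric]]) simp
      have sq1: "1 / sqrt u \<le> sqrt (real n + 1)"
      proof -
        have "1 / sqrt u = sqrt (1 / u)" by (simp add: real_sqrt_divide)
        also have "\<dots> \<le> sqrt (real n + 1)" using un by simp
        finally show ?thesis .
      qed
      have sq2: "sqrt (real n) \<le> 1 / sqrt u"
      proof -
        have "sqrt (real n) \<le> sqrt (1 / u)" using un by simp
        also have "\<dots> = 1 / sqrt u" by (simp add: real_sqrt_divide)
        finally show ?thesis .
      qed
      have "V (exp (-u)) / sqrt u = V (exp (-u)) * (1 / sqrt u)" by simp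
      also have "\<dots> \<le> V (exp (-1 / real n)) * sqrt (real n + 1)"
        using Vu1 sq1 V0 u by (intro mult_mono) auto
      also have "\<dots> = a n"
      proof -
        have "sqrt (real n) * sqrt ((real n + 1) / real n) = sqrt (real n + 1)"
          using n1 by (simp add: real_sqrt_divide)
        then show ?thesis unfolding a_def by (metis mult.assoc mult.commute)
      qed
      finally have A: "V (exp (-u)) / sqrt u \<le> a n" .
      have "b n = V (exp (-1 / (real n + 1))) * sqrt (real n)"
      proof -
        have "sqrt (real n + 1) * sqrt (real n / (real n + 1)) = sqrt (real n)"
          using n1 by (simp add: real_sqrt_divide)
        then show ?thesis unfolding b_def by (simp add: algebra_simps)
      qed
      also have "\<dots> \<le> V (exp (-u)) * (1 / sqrt u)"
        using Vu2 sq2 V0 u by (intro mult_mono) auto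
      finally have B: "b n \<le> V (exp (-u)) / sqrt u" by simp
      show ?thesis using A B by (simp add: n_def V_def)
    qed
    show "eventually (\<lambda>u. b (N u) \<le> measure \<mu> {exp (-u)..1} / sqrt u) (at_right 0)"
      using ev by eventually_elim (use key in blast)
    show "eventually (\<lambda>u. measure \<mu> {exp (-u)..1} / sqrt u \<le> a (N u)) (at_right 0)"
      using ev by eventually_elim (use key in blast)
  qed
qed

lemma Qlim: "((\<lambda>h. measure \<mu> {1-h..1} / sqrt h) \<longlongrightarrow> sqrt (2/pi)) (at_right 0)"
proof -
  have f: "filterlim (\<lambda>h::real. - ln (1 - h)) (at_right 0) (at_right 0)" by real_asymp
  have g: "((\<lambda>h::real. sqrt (- ln (1 - h) / h)) \<longlongrightarrow> 1) (at_right 0)" by real_asymp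
  have "((\<lambda>h. measure \<mu> {exp (- (- ln (1 - h)))..1} / sqrt (- ln (1 - h)) * sqrt (- ln (1 - h) / h)) \<longlongrightarrow> sqrt (2/pi) * 1) (at_right 0)"
    by (intro tendsto_mult g filterlim_compose[OF Vlim f])
  moreover have "eventually (\<lambda>h::real. 0 < h \<and> h < 1) (at_right 0)"
    unfolding eventually_at_right_field by (intro exI[of _ 1]) auto
  then have "eventually (\<lambda>h. measure \<mu> {exp (- (- ln (1 - h)))..1} / sqrt (- ln (1 - h)) * sqrt (- ln (1 - h) / h)
      = measure \<mu> {1-h..1} / sqrt h) (at_right 0)"
  proof eventually_elim
    case (elim h)
    have lp: "- ln (1 - h) > 0" using elim by simp
    have e1: "exp (- (- ln (1 - h))) = 1 - h" using elim by simp
    have e2: "z / sqrt L * sqrt (L / h) = z / sqrt h" if "L > 0" for z L :: real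
      using that elim by (simp add: real_sqrt_divide)
    show ?case unfolding e1 by (rule e2[OF lp])
  qed
  ultimately show ?thesis by (simp add: tendsto_cong)
qed

end

locale dens_setup = mu_setup +
  fixes D :: "real \<Rightarrow> real"
  assumes dens: "\<And>A. A \<in> sets borel \<Longrightarrow> A \<subseteq> {0<..<1} \<Longrightarrow>
           emeasure \<mu> A = (\<integral>\<^sup>+ t\<in>A. ennreal (D t) \<partial>lborel)"
    and Dmono: "mono_on {0<..<1} D"
begin

lemma point0: assumes "0 < a" "a < 1" shows "measure \<mu> {a} = 0"
proof -
  interpret prob_space \<mu> by (rule ps)
  have "emeasure \<mu> {a} = (\<integral>\<^sup>+ t\<in>{a}. ennreal (D t) \<partial>lborel)" using assms by (intro dens) auto
  also have "\<dots> = (\<integral>\<^sup>+ t. ennreal (D a) * indicator {a} t \<partial>lborel)"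
    by (intro nn_integral_cong) (auto simp: indicator_def)
  also have "\<dots> = 0" by (subst nn_integral_cmult_indicator) auto
  finally have "ennreal (measure \<mu> {a}) = 0" by (simp add: emeasure_eq_measure)
  then show ?thesis by simp
qed

lemma iv_up: assumes "0 < a" "a < b" "b < 1"
  shows "measure \<mu> {a<..<b} \<le> max (D b) 0 * (b - a)"
proof -
  interpret prob_space \<mu> by (rule ps)
  have "ennreal (measure \<mu> {a<..<b}) = (\<integral>\<^sup>+ t\<in>{a<..<b}. ennreal (D t) \<partial>lborel)"
    using assms by (subst emeasure_eq_measure[symmetric]) (intro dens; auto)
  also have "\<dots> \<le> (\<integral>\<^sup>+ t. ennreal (max (D b) 0) * indicator {a<..<b} t \<partial>lborel)"
  proof (intro nn_integral_mono)
    fix t show "ennreal (D t) * indicator {a<..<b} t \<le> ennreal (max (D b) 0) * indicator {a<..<b} t"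
    proof (cases "t \<in> {a<..<b}")
      case True
      then have "D t \<le> D b" using assms by (intro mono_onD[OF Dmono]) auto
      then show ?thesis using True by (auto intro!: ennreal_leI)
    qed auto
  qed
  also have "\<dots> = ennreal (max (D b) 0) * ennreal (b - a)"
    using assms by (subst nn_integral_cmult_indicator) auto
  also have "\<dots> = ennreal (max (D b) 0 * (b - a))"
    using assms by (simp add: ennreal_mult)
  finally show ?thesis using assms by (subst (asm) ennreal_le_iff) auto
qed

lemma iv_low: assumes "0 < a" "a < b" "b < 1"
  shows "D a * (b - a) \<le> measure \<mu> {a<..<b}"
proof (cases "D a \<le> 0")
  case True
  then have "D a * (b - a) \<le> 0" using assms by (simp add: mult_nonpos_nonneg)
  then show ?thesis by (smt (verit) measure_nonneg)
next
  case False
  interpret prob_space \<mu> by (rule ps)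
  have "ennreal (D a * (b - a)) = ennreal (D a) * ennreal (b - a)"
    using assms False by (simp add: ennreal_mult)
  also have "\<dots> = (\<integral>\<^sup>+ t. ennreal (D a) * indicator {a<..<b} t \<partial>lborel)"
    using assms by (subst nn_integral_cmult_indicator) auto
  also have "\<dots> \<le> (\<integral>\<^sup>+ t\<in>{a<..<b}. ennreal (D t) \<partial>lborel)"
  proof (intro nn_integral_mono)
    fix t show "ennreal (D a) * indicator {a<..<b} t \<le> ennreal (D t) * indicator {a<..<b} t"
    proof (cases "t \<in> {a<..<b}")
      case True
      then have "D a \<le> D t" using assms by (intro mono_onD[OF Dmono]) auto
      then show ?thesis using True by (auto intro!: ennreal_leI)
    qed auto
  qed
  also have "\<dots> = ennreal (measure \<mu> {a<..<b})"
    using assms by (subst emeasure_eq_measure[symmetric]) (intro dens[symmetric]; auto)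
  finally show ?thesis by (subst (asm) ennreal_le_iff) auto
qed

lemma Rdiff: assumes "0 < h1" "h1 < h2" "h2 < 1"
  shows "measure \<mu> {1-h2..1} - measure \<mu> {1-h1..1} = measure \<mu> {1-h2<..<1-h1}"
proof -
  interpret prob_space \<mu> by (rule ps)
  have eq: "{1-h2..1} = {1-h2} \<union> ({1-h2<..<1-h1} \<union> {1-h1..1})" using assms by auto
  have "measure \<mu> {1-h2..1} = measure \<mu> {1-h2} + (measure \<mu> {1-h2<..<1-h1} + measure \<mu> {1-h1..1})"
    unfolding eq using assms
    by (subst finite_measure_Union, auto simp: sets_mu, subst finite_measure_Union, auto simp: sets_mu)
  then show ?thesis using point0[of "1-h2"] assms by simp
qed

end

context dens_setup
begin

lemma Dlim: "((\<lambda>h. D (1 - h) * sqrt h) \<longlongrightarrow> sqrt (2/pi) / 2) (at_right 0)"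
proof (rule tendstoI)
  fix e :: real assume e: "e > 0"
  define c0 where "c0 = sqrt (2/pi :: real)"
  have c0: "c0 > 0" by (simp add: c0_def)
  define e' where "e' = min e (c0/4)"
  have e': "e' > 0" "e' \<le> e" "e' \<le> c0/4" using e c0 by (auto simp: e'_def)
  define R where "R h = measure \<mu> {1-h..1}" for h
  define Q where "Q h = R h / sqrt h" for h
  have "Q = (\<lambda>h. measure \<mu> {1-h..1} / sqrt h)" by (simp add: fun_eq_iff Q_def R_def)
  then have Qlim': "(Q \<longlongrightarrow> c0) (at_right 0)" using Qlim by (simp add: c0_def)
  have lo: "((\<lambda>x::real. c0 * ((sqrt (1 + x) - 1) / x)) \<longlongrightarrow> c0 * (1/2)) (at_right 0)"
    by (intro tendsto_mult tendsto_const) real_asymp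
  have up: "((\<lambda>x::real. c0 * ((1 - sqrt (1 - x)) / x)) \<longlongrightarrow> c0 * (1/2)) (at_right 0)"
    by (intro tendsto_mult tendsto_const) real_asymp
  have "eventually (\<lambda>x::real. c0 * ((sqrt (1 + x) - 1) / x) > c0/2 - e'/2) (at_right 0)"
    using order_tendstoD(1)[OF lo] e' by simp
  moreover have "eventually (\<lambda>x::real. c0 * ((1 - sqrt (1 - x)) / x) < c0/2 + e'/2) (at_right 0)"
    using order_tendstoD(2)[OF up] e' by simp
  ultimately have "eventually (\<lambda>x::real. c0 * ((sqrt (1 + x) - 1) / x) > c0/2 - e'/2 \<and> c0 * ((1 - sqrt (1 - x)) / x) < c0/2 + e'/2) (at_right 0)"
    by eventually_elim auto
  then obtain b where b: "b > 0" "\<And>x. x > 0 \<Longrightarrow> x < b \<Longrightarrow> c0 * ((sqrt (1 + x) - 1) / x) > c0/2 - e'/2 \<and> c0 * ((1 - sqrt (1 - x)) / x) < c0/2 + e'/2"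
    unfolding eventually_at_right_field by auto
  define \<epsilon> where "\<epsilon> = min (b/2) (1/2)"
  have eps: "\<epsilon> > 0" "\<epsilon> < 1" "\<epsilon> < b" using b by (auto simp: \<epsilon>_def)
  have eb: "c0 * ((sqrt (1 + \<epsilon>) - 1) / \<epsilon>) > c0/2 - e'/2" "c0 * ((1 - sqrt (1 - \<epsilon>)) / \<epsilon>) < c0/2 + e'/2"
    using b(2)[OF eps(1) eps(3)] by auto
  have sc: "filterlim (\<lambda>h. c * h) (at_right 0) (at_right (0::real))" if "c > 0" for c :: real
    using filterlim_times_pos[OF filterlim_ident that, of 0] by simp
  have Q1: "((\<lambda>h. Q ((1 + \<epsilon>) * h)) \<longlongrightarrow> c0) (at_right 0)"
    by (rule filterlim_compose[OF Qlim' sc]) (use eps in simp)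
  have Q2: "((\<lambda>h. Q ((1 - \<epsilon>) * h)) \<longlongrightarrow> c0) (at_right 0)"
    by (rule filterlim_compose[OF Qlim' sc]) (use eps in simp)
  define LOW where "LOW h = (Q ((1 + \<epsilon>) * h) * sqrt (1 + \<epsilon>) - Q h) / \<epsilon>" for h
  define UP where "UP h = (Q h - Q ((1 - \<epsilon>) * h) * sqrt (1 - \<epsilon>)) / \<epsilon>" for h
  have LOWl: "(LOW \<longlongrightarrow> (c0 * sqrt (1 + \<epsilon>) - c0) / \<epsilon>) (at_right 0)"
    unfolding LOW_def by (intro tendsto_intros Q1 Qlim') (use eps in simp)
  have UPl: "(UP \<longlongrightarrow> (c0 - c0 * sqrt (1 - \<epsilon>)) / \<epsilon>) (at_right 0)"
    unfolding UP_def by (intro tendsto_intros Q2 Qlim') (use eps in simp)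
  have "(c0 * sqrt (1 + \<epsilon>) - c0) / \<epsilon> = c0 * ((sqrt (1 + \<epsilon>) - 1) / \<epsilon>)"
    by (simp only: times_divide_eq_right right_diff_distrib mult_1_right)
  then have "c0/2 - e' < (c0 * sqrt (1 + \<epsilon>) - c0) / \<epsilon>" using eb(1) e' by linarith
  then have ev1: "eventually (\<lambda>h. LOW h > c0/2 - e') (at_right 0)"
    using order_tendstoD(1)[OF LOWl] by blast
  have "(c0 - c0 * sqrt (1 - \<epsilon>)) / \<epsilon> = c0 * ((1 - sqrt (1 - \<epsilon>)) / \<epsilon>)"
    by (simp only: times_divide_eq_right right_diff_distrib mult_1_right)
  then have "(c0 - c0 * sqrt (1 - \<epsilon>)) / \<epsilon> < c0/2 + e'" using eb(2) e' by linarith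
  then have ev2: "eventually (\<lambda>h. UP h < c0/2 + e') (at_right 0)"
    using order_tendstoD(2)[OF UPl] by blast
  have ev3: "eventually (\<lambda>h::real. 0 < h \<and> h < 1 / (1 + \<epsilon>)) (at_right 0)"
    unfolding eventually_at_right_field using eps by (intro exI[of _ "1 / (1 + \<epsilon>)"]) auto
  show "eventually (\<lambda>h. dist (D (1 - h) * sqrt h) (sqrt (2/pi) / 2) < e) (at_right 0)"
    using ev1 ev2 ev3
  proof eventually_elim
    case (elim h)
    have h: "0 < h" "(1 + \<epsilon>) * h < 1" using elim eps by (auto simp: field_simps)
    have sh: "sqrt h > 0" using h by simp
    have hs: "h / sqrt h = sqrt h" using h by (simp add: real_div_sqrt)
    have Rq: "R x = Q x * sqrt x" if "x > 0" for x using that by (simp add: Q_def)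
    have h2: "(1 - \<epsilon>) * h < h" "h < (1 + \<epsilon>) * h" "0 < (1 - \<epsilon>) * h" "h < 1" using h eps
      by (auto simp: algebra_simps) (smt (verit) mult_pos_pos)
    have m1: "R ((1 + \<epsilon>) * h) - R h = measure \<mu> {1 - (1 + \<epsilon>) * h<..<1 - h}"
      unfolding R_def using h h2 by (intro Rdiff) auto
    have m2: "measure \<mu> {1 - (1 + \<epsilon>) * h<..<1 - h} \<le> max (D (1 - h)) 0 * ((1 - h) - (1 - (1 + \<epsilon>) * h))"
      using h h2 by (intro iv_up) auto
    have "LOW h = (R ((1 + \<epsilon>) * h) - R h) / (\<epsilon> * sqrt h)"
    proof -
      have "Q ((1 + \<epsilon>) * h) * sqrt (1 + \<epsilon>) = R ((1 + \<epsilon>) * h) / sqrt h"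
        using eps h by (simp add: Q_def real_sqrt_mult)
      moreover have "Q h = R h / sqrt h" by (simp add: Q_def)
      ultimately show ?thesis unfolding LOW_def by (simp add: diff_divide_distrib mult.commute)
    qed
    also have "\<dots> \<le> max (D (1 - h)) 0 * (\<epsilon> * h) / (\<epsilon> * sqrt h)"
      using m1 m2 eps sh by (intro divide_right_mono) (auto simp: algebra_simps)
    also have "\<dots> = max (D (1 - h)) 0 * sqrt h"
      using eps sh hs by (simp add: field_simps)
    finally have low: "LOW h \<le> max (D (1 - h)) 0 * sqrt h" .
    have m3: "R h - R ((1 - \<epsilon>) * h) = measure \<mu> {1 - h<..<1 - (1 - \<epsilon>) * h}"
      unfolding R_def using h h2 by (intro Rdiff) auto
    have m4: "D (1 - h) * ((1 - (1 - \<epsilon>) * h) - (1 - h)) \<le> measure \<mu> {1 - h<..<1 - (1 - \<epsilon>) * h}"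
      using h h2 by (intro iv_low) auto
    have "D (1 - h) * sqrt h = D (1 - h) * (\<epsilon> * h) / (\<epsilon> * sqrt h)"
      using eps sh hs by (simp add: field_simps)
    also have "\<dots> \<le> (R h - R ((1 - \<epsilon>) * h)) / (\<epsilon> * sqrt h)"
      using m3 m4 eps sh by (intro divide_right_mono) (auto simp: algebra_simps)
    also have "\<dots> = UP h"
    proof -
      have "Q ((1 - \<epsilon>) * h) * sqrt (1 - \<epsilon>) = R ((1 - \<epsilon>) * h) / sqrt h"
        using eps h by (simp add: Q_def real_sqrt_mult)
      moreover have "Q h = R h / sqrt h" by (simp add: Q_def)
      ultimately show ?thesis unfolding UP_def by (simp add: diff_divide_distrib mult.commute)
    qed
    finally have upb: "D (1 - h) * sqrt h \<le> UP h" .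
    have "max (D (1 - h)) 0 * sqrt h > c0/4" using low elim e' by simp
    then have "D (1 - h) > 0"
    proof (rule contrapos_pp)
      assume "\<not> D (1 - h) > 0"
      then have "max (D (1 - h)) 0 = 0" by simp
      then show "\<not> max (D (1 - h)) 0 * sqrt h > c0/4" using c0 by simp
    qed
    then have "D (1 - h) * sqrt h > c0/2 - e'" using low elim by simp
    then show ?case using upb elim e' by (simp add: dist_real_def c0_def abs_less_iff)
  qed
qed

end

theorem theorem3p9:
  fixes m :: "nat \<Rightarrow> real" and \<mu> :: "real measure" and D :: "real \<Rightarrow> real"
  assumes "moment_seq m"
    and "prob_space \<mu>" and "sets \<mu> = sets borel"
    and "emeasure \<mu> (- {0..1}) = 0"
    and "\<And>n. (\<integral>t. t ^ n \<partial>\<mu>) = m n"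
    and "\<And>A. A \<in> sets borel \<Longrightarrow> A \<subseteq> {0<..<1} \<Longrightarrow>
           emeasure \<mu> A = (\<integral>\<^sup>+ t\<in>A. ennreal (D t) \<partial>lborel)"
    and "mono_on {0<..<1} D"
  shows "D \<sim>[at_left 1] (\<lambda>t. 1 / sqrt (2 * pi * (1 - t)))"
proof -
  have "dens_setup m \<mu> D"
    by (intro dens_setup.intro mu_setup.intro dens_setup_axioms.intro assms moment_asymp[OF assms(1)])
  then interpret dens_setup m \<mu> D .
  have ev: "eventually (\<lambda>t::real. t < 1) (at_left 1)"
    unfolding eventually_at_left_field by (intro exI[of _ 0]) auto
  have f: "filterlim (\<lambda>t::real. 1 - t) (at_right 0) (at_left 1)"
  proof (rule tendsto_imp_filterlim_at_right)
    have "((\<lambda>t::real. 1 - t) \<longlongrightarrow> 1 - 1) (at_left 1)" by (intro tendsto_intros)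
    then show "((\<lambda>t::real. 1 - t) \<longlongrightarrow> 0) (at_left 1)" by simp
    show "eventually (\<lambda>t::real. 1 - t > 0) (at_left 1)" using ev by eventually_elim simp
  qed
  have L: "((\<lambda>t. D t * sqrt (1 - t)) \<longlongrightarrow> sqrt (2/pi) / 2) (at_left 1)"
    using filterlim_compose[OF Dlim f] by simp
  have "((\<lambda>t. sqrt (2*pi) * (D t * sqrt (1 - t))) \<longlongrightarrow> sqrt (2*pi) * (sqrt (2/pi) / 2)) (at_left 1)"
    by (intro tendsto_intros L)
  moreover have "sqrt (2*pi) * (sqrt (2/pi) / 2) = 1"
  proof -
    have "sqrt (2*pi) * sqrt (2/pi) = sqrt (2*pi*(2/pi))" by (simp only: real_sqrt_mult)
    also have "2*pi*(2/pi) = (2*2::real)" by simp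
    also have "sqrt (2*2::real) = 2" by (simp only: real_sqrt_abs2)
    finally show ?thesis by simp
  qed
  ultimately have lim1: "((\<lambda>t. sqrt (2*pi) * (D t * sqrt (1 - t))) \<longlongrightarrow> 1) (at_left 1)" by simp
  have eq: "eventually (\<lambda>t. sqrt (2*pi) * (D t * sqrt (1 - t)) = D t / (1 / sqrt (2 * pi * (1 - t)))) (at_left 1)"
    using ev
  proof eventually_elim
    case (elim t)
    have "D t / (1 / sqrt (2 * pi * (1 - t))) = D t * sqrt (2 * pi * (1 - t))" by simp
    also have "\<dots> = sqrt (2*pi) * (D t * sqrt (1 - t))"
      by (subst real_sqrt_mult[of "2*pi" "1-t"]) (simp only: mult_ac)
    finally show ?case by (rule sym)
  qed
  have "((\<lambda>t. D t / (1 / sqrt (2 * pi * (1 - t)))) \<longlongrightarrow> 1) (at_left 1)"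
    by (rule Lim_transform_eventually[OF lim1 eq])
  then show ?thesis by (rule asymp_equivI')
qed


end
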